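(* Let $q$ be a prime power and $m$ a positive integer with $\gcd(m,q)=1$, and let $R=\mathbb{F}_q[x]/\langle x^m-1\rangle$. Let $C$ and $D$ be one-generator quasi-cyclic codes of length $2m$ and index $2$ over $\mathbb{F}_q$, i.e. $C$ is the $R$-submodule of $R^2$ generated by $(g_{11}(x),g_{12}(x))$ and $D$ is the $R$-submodule generated by $(f_{11}(x),f_{12}(x))$, where $g_{11}(x)\mid x^m-1$ and $f_{11}(x)\mid x^m-1$. Then $(C,D)$ is a linear complementary pair of codes if and only if all of the following hold: (A) $\gcd(g_{11}(x),g_{12}(x))=1$; (B) $\gcd(f_{11}(x),f_{12}(x))=1$; (C) $\gcd\big(x^m-1,\,g_{11}(x)f_{12}(x)-g_{12}(x)f_{11}(x)\big)=1$.
   Context: A pair $(C,D)$ of $\mathbb{F}_q$-linear codes of the same length $n$ is a linear complementary pair (LCP) of codes if $C\cap D=\{0\}$ and $C+D=\mathbb{F}_q^n$. A quasi-cyclic code of length $2m$ and index $2$ is identified with an $R$-submodule of $R^2$ via $(c_{0,0},c_{0,1},c_{1,0},c_{1,1},\dots,c_{m-1,0},c_{m-1,1})\mapsto(c_0(x),c_1(x))$ with $c_j(x)=\sum_{i=0}^{m-1}c_{i,j}x^i$; elements of $R$ are represented by polynomials in $\mathbb{F}_q[x]$. *)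

theory Defs
  imports "HOL-Computational_Algebra.Computational_Algebra"
begin

definition xm1 :: "nat \<Rightarrow> 'a::field poly" where
  "xm1 m = monom 1 m - 1"

text \<open>Elements of R = F_q[x]/(x^m-1) are represented by their canonical
  representatives (polynomials of degree < m, i.e. remainders mod x^m-1).\<close>
definition ambient :: "nat \<Rightarrow> ('a::field poly \<times> 'a poly) set" where
  "ambient m = {(c0, c1). c0 mod xm1 m = c0 \<and> c1 mod xm1 m = c1}"

definition qc_code :: "nat \<Rightarrow> 'a::field poly \<Rightarrow> 'a poly \<Rightarrow> ('a poly \<times> 'a poly) set" where
  "qc_code m g1 g2 = {((r * g1) mod xm1 m, (r * g2) mod xm1 m) | r. True}"

definition is_LCP :: "nat \<Rightarrow> ('a::field poly \<times> 'a poly) set \<Rightarrow> ('a poly \<times> 'a poly) set \<Rightarrow> bool" where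
  "is_LCP m C D \<longleftrightarrow> C \<inter> D = {(0, 0)} \<and>
     {(c0 + d0, c1 + d1) | c0 c1 d0 d1. (c0, c1) \<in> C \<and> (d0, d1) \<in> D} = ambient m"

end

theory Submission
  imports Defs
begin

lemma qc_mem: "(a, b) \<in> qc_code m g1 g2 \<longleftrightarrow> (\<exists>r. a = (r * g1) mod xm1 m \<and> b = (r * g2) mod xm1 m)"
  unfolding qc_code_def by auto

lemma deg_xm1: "m > 0 \<Longrightarrow> degree (xm1 m :: 'a::field poly) = m"
  unfolding xm1_def diff_conv_add_uminus
  by (subst degree_add_eq_left) (simp_all add: degree_monom_eq)

lemma one_mod_xm1: "m > 0 \<Longrightarrow> (1::'a::field poly) mod xm1 m = 1"
  by (rule mod_poly_less) (simp add: deg_xm1)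

lemma xm1_nz: "m > 0 \<Longrightarrow> xm1 m \<noteq> (0::'a::field poly)"
  using deg_xm1[of m] by (metis degree_0 less_numeral_extra(3))

lemma dvd_coprime:
  fixes M D X :: "'a::field poly"
  assumes "M dvd X * D - 1" shows "coprime M D"
proof (rule coprimeI)
  fix c assume "c dvd M" "c dvd D"
  then have "c dvd X * D - 1" "c dvd X * D" using assms by auto
  then have "c dvd X * D - (X * D - 1)" by (rule dvd_diff[rotated])
  then have "c dvd 1" by simp
  then show "is_unit c" by simp
qed

lemma bezout_gen:
  fixes a b :: "'a::euclidean_ring"
  shows "\<exists>d u v. u * a + v * b = d \<and> d dvd a \<and> d dvd b"
proof (induction b arbitrary: a rule: measure_induct_rule[of euclidean_size])
  case (less b)
  show ?case
  proof (cases "b = 0")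
    case True
    then show ?thesis by (rule_tac x=a in exI, rule_tac x=1 in exI, rule_tac x=0 in exI) simp
  next
    case False
    then have "euclidean_size (a mod b) < euclidean_size b" by (rule mod_size_less)
    then obtain d u v where IH: "u * b + v * (a mod b) = d" "d dvd b" "d dvd a mod b"
      using less by blast
    have am: "a mod b = a - (a div b) * b" by (simp add: minus_div_mult_eq_mod)
    have "v * a + (u - v * (a div b)) * b = d" using IH(1) unfolding am by (simp add: algebra_simps)
    moreover have "d dvd a"
    proof -
      have "a = (a div b) * b + a mod b" by simp
      moreover have "d dvd (a div b) * b + a mod b" by (rule dvd_add[OF dvd_mult[OF IH(2)] IH(3)])
      ultimately show ?thesis by metis
    qed
    ultimately show ?thesis using IH(2) by blast
  qed
qed

lemma bezout_coprime:
  fixes a b :: "'a::euclidean_ring"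
  assumes "coprime a b"
  shows "\<exists>u v. u * a + v * b = 1"
proof -
  obtain d u v where h: "u * a + v * b = d" "d dvd a" "d dvd b" using bezout_gen by blast
  then have "is_unit d" using assms by (meson coprime_common_divisor)
  then obtain k where k: "1 = d * k" by (auto elim: dvdE)
  have "(u * k) * a + (v * k) * b = (u * a + v * b) * k" by (simp add: algebra_simps)
  also have "\<dots> = 1" using h(1) k by simp
  finally have "(u * k) * a + (v * k) * b = 1" .
  then show ?thesis by blast
qed

theorem theorem4p3:
  fixes g11 g12 f11 f12 :: "'a::{field, finite} poly" and m :: nat
  assumes "m > 0"
    and "coprime m (card (UNIV :: 'a set))"
    and "g11 dvd xm1 m"
    and "f11 dvd xm1 m"
  shows "is_LCP m (qc_code m g11 g12) (qc_code m f11 f12) \<longleftrightarrow>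
           (coprime g11 g12 \<and> coprime f11 f12 \<and>
            coprime (xm1 m) (g11 * f12 - g12 * f11))"
proof -
  define M where "M = (xm1 m :: 'a poly)"
  define \<Delta> where "\<Delta> = g11 * f12 - g12 * f11"
  have Mnz: "M \<noteq> 0" using xm1_nz[OF assms(1)] M_def by simp
  have one: "1 mod M = 1" using one_mod_xm1[OF assms(1)] M_def by simp
  have modsum: "(a mod M + b mod M) mod M = a mod M + b mod M" for a b
    by (simp add: poly_mod_add_left)
  show ?thesis
  proof
    assume L: "is_LCP m (qc_code m g11 g12) (qc_code m f11 f12)"
    let ?S = "{(c0 + d0, c1 + d1) | c0 c1 d0 d1. (c0, c1) \<in> qc_code m g11 g12 \<and> (d0, d1) \<in> qc_code m f11 f12}"
    have S: "?S = ambient m" using L unfolding is_LCP_def by blast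
    have "(1, 0 * M) \<in> ambient m" unfolding ambient_def using one M_def by simp
    then have "(1, 0 * M) \<in> ?S" using S by simp
    then obtain r s where rs: "1 = (r*g11) mod M + (s*f11) mod M" "0 * M = (r*g12) mod M + (s*f12) mod M"
      unfolding qc_mem M_def by blast
    have "(0 * M, 1) \<in> ambient m" unfolding ambient_def using one M_def by simp
    then have "(0 * M, 1) \<in> ?S" using S by simp
    then obtain r' s' where rs': "0 * M = (r'*g11) mod M + (s'*f11) mod M" "1 = (r'*g12) mod M + (s'*f12) mod M"
      unfolding qc_mem M_def by blast
    have A: "M dvd (r*g11 + s*f11) - 1"
      using rs(1) by (metis mod_eq_dvd_iff one poly_mod_add_left)
    have B: "M dvd (r*g12 + s*f12)"
      using rs(2) by (metis mod_0_imp_dvd poly_mod_add_left mult_zero_left)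
    have A': "M dvd (r'*g11 + s'*f11)"
      using rs'(1) by (metis mod_0_imp_dvd poly_mod_add_left mult_zero_left)
    have B': "M dvd (r'*g12 + s'*f12) - 1"
      using rs'(2) by (metis mod_eq_dvd_iff one poly_mod_add_left)
    have id: "(r*s' - s*r') * \<Delta> - 1 =
       ((r*g11 + s*f11) - 1) * (r'*g12 + s'*f12) + ((r'*g12 + s'*f12) - 1)
        - (r*g12 + s*f12) * (r'*g11 + s'*f11)"
      unfolding \<Delta>_def by (simp add: algebra_simps)
    have "M dvd (r*s' - s*r') * \<Delta> - 1"
      unfolding id by (rule dvd_diff[OF dvd_add[OF dvd_mult2[OF A] B'] dvd_mult2[OF B]])
    then have cop: "coprime M \<Delta>" by (rule dvd_coprime)
    have "coprime g11 g12"
    proof (rule coprimeI)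
      fix c assume "c dvd g11" "c dvd g12"
      then have "c dvd M" "c dvd \<Delta>" using assms(3) M_def \<Delta>_def by auto
      then show "is_unit c" using cop by (meson coprime_common_divisor)
    qed
    moreover have "coprime f11 f12"
    proof (rule coprimeI)
      fix c assume "c dvd f11" "c dvd f12"
      then have "c dvd M" "c dvd \<Delta>" using assms(4) M_def \<Delta>_def by auto
      then show "is_unit c" using cop by (meson coprime_common_divisor)
    qed
    ultimately show "coprime g11 g12 \<and> coprime f11 f12 \<and> coprime (xm1 m) (g11 * f12 - g12 * f11)"
      using cop M_def \<Delta>_def by simp
  next
    assume H: "coprime g11 g12 \<and> coprime f11 f12 \<and> coprime (xm1 m) (g11 * f12 - g12 * f11)"
    then have cop: "coprime \<Delta> M" unfolding M_def \<Delta>_def by (simp add: coprime_commute)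
    obtain u v where uv: "u * \<Delta> + v * M = 1"
      using bezout_coprime[OF cop] by blast
    have u: "M dvd u * \<Delta> - 1"
    proof -
      have "u * \<Delta> - 1 = M * (- v)" using uv by (simp add: algebra_simps eq_diff_eq)
      then show ?thesis by simp
    qed
    have I: "qc_code m g11 g12 \<inter> qc_code m f11 f12 = {(0, 0)}"
    proof
      show "{(0, 0)} \<subseteq> qc_code m g11 g12 \<inter> qc_code m f11 f12"
      proof -
        have "(0, 0) \<in> qc_code m a b" for a b :: "'a poly"
          unfolding qc_mem by (rule exI[of _ 0]) simp
        then show ?thesis by simp
      qed
    next
      show "qc_code m g11 g12 \<inter> qc_code m f11 f12 \<subseteq> {(0, 0)}"
      proof
        fix p assume p: "p \<in> qc_code m g11 g12 \<inter> qc_code m f11 f12"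
        obtain a b where ab: "p = (a, b)" by fastforce
        obtain r where r: "a = (r*g11) mod M" "b = (r*g12) mod M"
          using p ab qc_mem M_def by blast
        obtain s where s: "a = (s*f11) mod M" "b = (s*f12) mod M"
          using p ab qc_mem M_def by blast
        have d1: "M dvd r*g11 - s*f11" using r s by (metis mod_eq_dvd_iff)
        have d2: "M dvd r*g12 - s*f12" using r s by (metis mod_eq_dvd_iff)
        have "r * \<Delta> = f12 * (r*g11 - s*f11) - f11 * (r*g12 - s*f12)"
          unfolding \<Delta>_def by (simp add: algebra_simps)
        then have d3: "M dvd r * \<Delta>" using d1 d2 by (simp add: dvd_diff)
        have "r = u * (r * \<Delta>) - r * (u * \<Delta> - 1)" by (simp add: algebra_simps)
        also have "M dvd \<dots>" by (rule dvd_diff[OF dvd_mult[OF d3] dvd_mult[OF u]])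
        finally have "M dvd r" .
        then have "a = 0" "b = 0" using r by (simp_all add: dvd_imp_mod_0)
        then show "p \<in> {(0, 0)}" using ab by simp
      qed
    qed
    have S: "{(c0 + d0, c1 + d1) | c0 c1 d0 d1. (c0, c1) \<in> qc_code m g11 g12 \<and> (d0, d1) \<in> qc_code m f11 f12} = ambient m"
    proof
      show "{(c0 + d0, c1 + d1) | c0 c1 d0 d1. (c0, c1) \<in> qc_code m g11 g12 \<and> (d0, d1) \<in> qc_code m f11 f12} \<subseteq> ambient m"
        unfolding ambient_def qc_code_def using modsum M_def by auto
    next
      show "ambient m \<subseteq> {(c0 + d0, c1 + d1) | c0 c1 d0 d1. (c0, c1) \<in> qc_code m g11 g12 \<and> (d0, d1) \<in> qc_code m f11 f12}"
      proof
        fix p :: "'a poly \<times> 'a poly" assume p: "p \<in> ambient m"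
        obtain c0 c1 where c: "p = (c0, c1)" "c0 mod M = c0" "c1 mod M = c1"
          using p unfolding ambient_def M_def by blast
        define r where "r = u * (c0 * f12 - c1 * f11)"
        define s where "s = u * (g11 * c1 - g12 * c0)"
        have e1: "r*g11 + s*f11 = (u * \<Delta>) * c0" unfolding r_def s_def \<Delta>_def by (simp add: algebra_simps)
        have e2: "r*g12 + s*f12 = (u * \<Delta>) * c1" unfolding r_def s_def \<Delta>_def by (simp add: algebra_simps)
        have k: "((u * \<Delta>) * c) mod M = c mod M" for c
        proof -
          have "M dvd (u * \<Delta>) * c - c"
            using u by (metis dvd_mult2 left_diff_distrib' mult_1)
          then show ?thesis by (simp add: mod_eq_dvd_iff)
        qed
        have "c0 = (r*g11) mod M + (s*f11) mod M"
          using k[of c0] c e1 by (metis poly_mod_add_left)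
        moreover have "c1 = (r*g12) mod M + (s*f12) mod M"
          using k[of c1] c e2 by (metis poly_mod_add_left)
        ultimately have "c0 = (r*g11) mod M + (s*f11) mod M \<and> c1 = (r*g12) mod M + (s*f12) mod M" by simp
        then show "p \<in> {(c0 + d0, c1 + d1) | c0 c1 d0 d1. (c0, c1) \<in> qc_code m g11 g12 \<and> (d0, d1) \<in> qc_code m f11 f12}"
          unfolding c(1) qc_code_def M_def by blast
      qed
    qed
    show "is_LCP m (qc_code m g11 g12) (qc_code m f11 f12)"
      unfolding is_LCP_def using I S by blast
  qed
qed

end
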